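(* Let $\mathcal{P}=\{\mathbb{P}_n\}_{n\ge1}$ ($\mathbb{P}_n$ on $\mathbb{R}^n$) be a family of probability measures which is dominated by a family of (possibly scaled) standard normal distributions, i.e. by a family $\{\mathbb{P}'_n\}$ where $\mathbb{P}'_n$ is the law of $s_n Z_n$ with $Z_n$ standard normal in $\mathbb{R}^n$ and $s_n>0$. Then $\mathcal{P}$ has exponential Fisher separability.
   Context: $\{\mathbb{P}'_n\}$ dominates $\{\mathbb{P}_n\}$ if there is a constant $C$ such that $\mathbb{P}_n(S)\le C\,\mathbb{P}'_n(S)$ for all $n$ and all measurable $S\subset\mathbb{R}^n$. A family $\{\mathbb{P}_n\}$ has exponential Fisher separability if there exist constants $a>0$, $b\in(0,1)$ such that for all $n$, if $\boldsymbol{x},\boldsymbol{y}$ are i.i.d. with law $\mathbb{P}_n$, then $(\boldsymbol{x},\boldsymbol{x})>(\boldsymbol{x},\boldsymbol{y})$ with probability at least $1-ab^n$ ($(\cdot,\cdot)$ the Euclidean inner product). *)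

theory Defs
  imports "HOL-Probability.Probability"
begin

text \<open>R^n is represented as the product measurable space of functions on the
index set {..<n} (extensional outside), with the Borel sigma-algebra.\<close>

definition euclid_space :: "nat \<Rightarrow> (nat \<Rightarrow> real) measure" where
  "euclid_space n = PiM {..<n} (\<lambda>_. lborel)"

definition ip :: "nat \<Rightarrow> (nat \<Rightarrow> real) \<Rightarrow> (nat \<Rightarrow> real) \<Rightarrow> real" where
  "ip n x y = (\<Sum>i<n. x i * y i)"

definition std_gauss :: "nat \<Rightarrow> (nat \<Rightarrow> real) measure" where
  "std_gauss n = PiM {..<n} (\<lambda>_. density lborel std_normal_density)"

definition scaled_gauss :: "real \<Rightarrow> nat \<Rightarrow> (nat \<Rightarrow> real) measure" where
  "scaled_gauss s n = distr (std_gauss n) (euclid_space n) (\<lambda>x. restrict (\<lambda>i. s * x i) {..<n})"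

definition dominates ::
  "(nat \<Rightarrow> (nat \<Rightarrow> real) measure) \<Rightarrow> (nat \<Rightarrow> (nat \<Rightarrow> real) measure) \<Rightarrow> bool" where
  "dominates P' P \<longleftrightarrow> (\<exists>C. \<forall>n\<ge>1. \<forall>S \<in> sets (euclid_space n).
      measure (P n) S \<le> C * measure (P' n) S)"

definition exp_fisher_separable :: "(nat \<Rightarrow> (nat \<Rightarrow> real) measure) \<Rightarrow> bool" where
  "exp_fisher_separable P \<longleftrightarrow> (\<exists>a b. a > 0 \<and> 0 < b \<and> b < 1 \<and> (\<forall>n\<ge>1.
      measure (P n \<Otimes>\<^sub>M P n) {(x, y) \<in> space (P n \<Otimes>\<^sub>M P n). ip n x x > ip n x y}
        \<ge> 1 - a * b ^ n))"

end

theory Submission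
  imports Defs
begin

lemma nn_normal: "s > 0 \<Longrightarrow> (\<integral>\<^sup>+x. ennreal (normal_density m s x) \<partial>lborel) = 1"
  by (subst nn_integral_eq_integral) (auto intro: integrable_normal_density simp: integral_normal_density)

lemma gA: "(\<integral>\<^sup>+y. ennreal (exp (c*y - c*c)) \<partial>density lborel std_normal_density) = ennreal (exp (-(c^2)/2))"
proof -
  have eq: "std_normal_density y * exp (c*y - c*c) = exp (-(c^2)/2) * normal_density c 1 y" for y
  proof -
    have "exp (- y\<^sup>2 / 2) * exp (c*y - c*c) = exp (-(c^2)/2) * exp (-(y - c)\<^sup>2 / 2)"
      unfolding mult_exp_exp by (rule arg_cong[where f=exp]) (simp add: power2_eq_square field_simps)
    then show ?thesis by (simp add: std_normal_density_def normal_density_def)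
  qed
  have "(\<integral>\<^sup>+y. ennreal (exp (c*y - c*c)) \<partial>density lborel std_normal_density)
     = (\<integral>\<^sup>+y. ennreal (std_normal_density y) * ennreal (exp (c*y - c*c)) \<partial>lborel)"
    by (subst nn_integral_density) auto
  also have "\<dots> = (\<integral>\<^sup>+y. ennreal (exp (-(c^2)/2)) * ennreal (normal_density c 1 y) \<partial>lborel)"
    by (simp add: ennreal_mult'[symmetric] eq)
  also have "\<dots> = ennreal (exp (-(c^2)/2))"
    by (subst nn_integral_cmult) (auto simp: nn_normal)
  finally show ?thesis .
qed

lemma gB: "(\<integral>\<^sup>+x. ennreal (exp (-(x^2)/2)) \<partial>density lborel std_normal_density) = ennreal (1 / sqrt 2)"
proof -
  have eq: "std_normal_density x * exp (-(x^2)/2) = (1 / sqrt 2) * normal_density 0 (sqrt (1/2)) x" for x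
  proof -
    have "exp (- x\<^sup>2 / 2) * exp (-(x^2)/2) = exp (-(x^2))"
      unfolding mult_exp_exp by simp
    moreover have "sqrt (2*pi) = sqrt 2 * sqrt pi" by (simp add: real_sqrt_mult)
    ultimately show ?thesis by (simp add: std_normal_density_def normal_density_def)
  qed
  have "(\<integral>\<^sup>+x. ennreal (exp (-(x^2)/2)) \<partial>density lborel std_normal_density)
     = (\<integral>\<^sup>+x. ennreal (std_normal_density x) * ennreal (exp (-(x^2)/2)) \<partial>lborel)"
    by (subst nn_integral_density) auto
  also have "\<dots> = (\<integral>\<^sup>+x. ennreal (1 / sqrt 2) * ennreal (normal_density 0 (sqrt (1/2)) x) \<partial>lborel)"
  proof (rule nn_integral_cong)
    fix x
    have "ennreal (std_normal_density x) * ennreal (exp (-(x^2)/2)) = ennreal (std_normal_density x * exp (-(x^2)/2))"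
      by (rule ennreal_mult[symmetric]) auto
    also have "\<dots> = ennreal ((1 / sqrt 2) * normal_density 0 (sqrt (1/2)) x)" by (simp only: eq)
    also have "\<dots> = ennreal (1 / sqrt 2) * ennreal (normal_density 0 (sqrt (1/2)) x)"
      by (rule ennreal_mult) auto
    finally show "ennreal (std_normal_density x) * ennreal (exp (-(x^2)/2)) = ennreal (1 / sqrt 2) * ennreal (normal_density 0 (sqrt (1/2)) x)" .
  qed
  also have "\<dots> = ennreal (1 / sqrt 2)"
    by (subst nn_integral_cmult) (auto simp: nn_normal)
  finally show ?thesis .
qed

lemma gauss_prob: "prob_space (std_gauss n)"
  unfolding std_gauss_def by (intro prob_space_PiM prob_space_normal_density) simp

lemma gauss_sets: "sets (std_gauss n) = sets (euclid_space n)"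
  unfolding std_gauss_def euclid_space_def by (intro sets_PiM_cong) auto

lemma ip_meas: "(\<lambda>p. ip n (fst p) (snd p)) \<in> borel_measurable (euclid_space n \<Otimes>\<^sub>M euclid_space n)"
  unfolding ip_def euclid_space_def
  by (intro borel_measurable_sum borel_measurable_times measurable_compose[OF measurable_fst] measurable_compose[OF measurable_snd] measurable_component_singleton) auto

lemma gauss_bound:
  "(\<integral>\<^sup>+x. \<integral>\<^sup>+y. ennreal (exp (ip n x y - ip n x x)) \<partial>std_gauss n \<partial>std_gauss n) = ennreal ((1 / sqrt 2) ^ n)"
proof -
  define N where "N = density lborel std_normal_density"
  interpret product_sigma_finite "\<lambda>_. N"
    unfolding N_def product_sigma_finite_def
    using prob_space_normal_density[of 1 0] prob_space_imp_sigma_finite by auto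
  have G: "std_gauss n = PiM {..<n} (\<lambda>_. N)" unfolding std_gauss_def N_def ..
  have inner: "(\<integral>\<^sup>+y. ennreal (exp (ip n x y - ip n x x)) \<partial>std_gauss n) = (\<Prod>i<n. ennreal (exp (-((x i)^2)/2)))" for x
  proof -
    have "(\<integral>\<^sup>+y. ennreal (exp (ip n x y - ip n x x)) \<partial>std_gauss n)
        = (\<integral>\<^sup>+y. (\<Prod>i<n. (\<lambda>t. ennreal (exp (x i * t - x i * x i))) (y i)) \<partial>PiM {..<n} (\<lambda>_. N))"
      unfolding G
    proof (rule nn_integral_cong)
      fix y
      have "exp (ip n x y - ip n x x) = (\<Prod>i<n. exp (x i * y i - x i * x i))"
        unfolding ip_def by (simp add: exp_sum[symmetric] sum_subtractf)
      then show "ennreal (exp (ip n x y - ip n x x)) = (\<Prod>i<n. (\<lambda>t. ennreal (exp (x i * t - x i * x i))) (y i))"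
        by (simp add: prod_ennreal)
    qed
    also have "\<dots> = (\<Prod>i<n. \<integral>\<^sup>+t. ennreal (exp (x i * t - x i * x i)) \<partial>N)"
      by (rule product_nn_integral_prod) (auto simp: N_def)
    also have "\<dots> = (\<Prod>i<n. ennreal (exp (-((x i)^2)/2)))"
      unfolding N_def by (simp add: gA)
    finally show ?thesis .
  qed
  have "(\<integral>\<^sup>+x. \<integral>\<^sup>+y. ennreal (exp (ip n x y - ip n x x)) \<partial>std_gauss n \<partial>std_gauss n)
      = (\<integral>\<^sup>+x. (\<Prod>i<n. (\<lambda>t. ennreal (exp (-(t^2)/2))) (x i)) \<partial>PiM {..<n} (\<lambda>_. N))"
    unfolding inner by (simp add: G)
  also have "\<dots> = (\<Prod>i<n. \<integral>\<^sup>+t. ennreal (exp (-(t^2)/2)) \<partial>N)"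
    by (rule product_nn_integral_prod) (auto simp: N_def)
  also have "\<dots> = ennreal (1 / sqrt 2) ^ n"
    unfolding N_def gB by simp
  also have "\<dots> = ennreal ((1 / sqrt 2) ^ n)"
    by (simp add: ennreal_power)
  finally show ?thesis .
qed

lemma ip_meas2:
  assumes "f \<in> M \<rightarrow>\<^sub>M euclid_space n" "g \<in> M \<rightarrow>\<^sub>M euclid_space n"
  shows "(\<lambda>p. ip n (f p) (g p)) \<in> borel_measurable M"
  unfolding ip_def
proof (intro borel_measurable_sum borel_measurable_times)
  fix i assume i: "i \<in> {..<n}"
  have c: "(\<lambda>x. x i) \<in> euclid_space n \<rightarrow>\<^sub>M borel"
    unfolding euclid_space_def using i by (simp add: measurable_component_singleton)
  show "(\<lambda>p. f p i) \<in> borel_measurable M" using measurable_comp[OF assms(1) c] by (simp add: o_def)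
  show "(\<lambda>p. g p i) \<in> borel_measurable M" using measurable_comp[OF assms(2) c] by (simp add: o_def)
qed

lemma dom_nn:
  assumes sets: "sets M = sets N" and fm: "finite_measure M" "finite_measure N" and C: "C \<ge> 0"
    and dom: "\<And>A. A \<in> sets N \<Longrightarrow> measure M A \<le> C * measure N A"
    and f: "f \<in> borel_measurable N"
  shows "nn_integral M f \<le> ennreal C * nn_integral N f"
proof -
  have "M \<le> scale_measure (ennreal C) N"
    unfolding le_measure_iff
  proof (simp add: space_scale_measure sets_eq_imp_space_eq[OF sets] sets le_fun_def, intro allI)
    fix A
    show "emeasure M A \<le> ennreal C * emeasure N A"
    proof (cases "A \<in> sets N")
      case True
      have "emeasure M A = ennreal (measure M A)" using fm(1) by (simp add: finite_measure.emeasure_eq_measure)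
      also have "\<dots> \<le> ennreal (C * measure N A)" using dom[OF True] by (rule ennreal_leI)
      also have "\<dots> = ennreal C * emeasure N A"
        using fm(2) C by (simp add: finite_measure.emeasure_eq_measure ennreal_mult)
      finally show ?thesis .
    next
      case False
      then show ?thesis using sets by (simp add: emeasure_notin_sets)
    qed
  qed
  then have "nn_integral M f \<le> nn_integral (scale_measure (ennreal C) N) f"
    by (intro nn_integral_mono_measure) (simp add: sets)
  also have "\<dots> = ennreal C * nn_integral N f" using f by (rule nn_integral_scale_measure)
  finally show ?thesis .
qed


theorem corollary5:
  fixes P :: "nat \<Rightarrow> (nat \<Rightarrow> real) measure" and s :: "nat \<Rightarrow> real"
  assumes "\<And>n. n \<ge> 1 \<Longrightarrow> prob_space (P n)"
    and "\<And>n. n \<ge> 1 \<Longrightarrow> sets (P n) = sets (euclid_space n)"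
    and "\<And>n. n \<ge> 1 \<Longrightarrow> s n > 0"
    and "dominates (\<lambda>n. scaled_gauss (s n) n) P"
  shows "exp_fisher_separable P"
proof -
  obtain C0 where C0: "\<forall>n\<ge>1. \<forall>S\<in>sets (euclid_space n). measure (P n) S \<le> C0 * measure (scaled_gauss (s n) n) S"
    using assms(4) unfolding dominates_def by blast
  define C where "C = max C0 1"
  have C1: "C \<ge> 1" unfolding C_def by simp
  have b: "0 < 1 / sqrt 2" "1 / sqrt (2::real) < 1" by auto
  show ?thesis unfolding exp_fisher_separable_def
  proof (rule exI[of _ "C^2"], rule exI[of _ "1 / sqrt 2"], intro conjI allI impI b)
    show "C^2 > 0" using C1 by simp
    fix n :: nat assume n: "n \<ge> 1"
    define E where "E = euclid_space n"
    define G where "G = std_gauss n"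
    define sc where "sc = (\<lambda>x::nat\<Rightarrow>real. restrict (\<lambda>i. s n * x i) {..<n})"
    define Q where "Q = scaled_gauss (s n) n"
    have Qdef: "Q = distr G E sc" unfolding Q_def scaled_gauss_def G_def E_def sc_def ..
    interpret Pn: prob_space "P n" using assms(1)[OF n] .
    interpret Gp: prob_space G unfolding G_def by (rule gauss_prob)
    have scm: "sc \<in> G \<rightarrow>\<^sub>M E"
      unfolding sc_def E_def euclid_space_def
    proof (rule measurable_restrict)
      fix i assume i: "i \<in> {..<n}"
      have "(\<lambda>x. x i) \<in> G \<rightarrow>\<^sub>M borel"
        using i unfolding G_def std_gauss_def by (simp add: measurable_component_singleton)
      then show "(\<lambda>x. s n * x i) \<in> G \<rightarrow>\<^sub>M lborel" by simp
    qed
    interpret Qp: prob_space Q unfolding Qdef using scm by (rule Gp.prob_space_distr)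
    have setsP: "sets (P n) = sets E" unfolding E_def using assms(2)[OF n] .
    have setsQ: "sets Q = sets E" unfolding Qdef by simp
    have setsG: "sets G = sets E" unfolding G_def E_def by (rule gauss_sets)
    have spP: "space (P n) = space E" using sets_eq_imp_space_eq[OF setsP] .
    have spQ: "space Q = space E" using sets_eq_imp_space_eq[OF setsQ] .
    define F where "F = {(x,y) \<in> space (E \<Otimes>\<^sub>M E). ip n x x \<le> ip n x y}"
    have F2: "F = {p \<in> space (E \<Otimes>\<^sub>M E). ip n (fst p) (fst p) \<le> ip n (fst p) (snd p)}"
      unfolding F_def by auto
    have m1[measurable]: "(\<lambda>p. ip n (fst p) (fst p)) \<in> borel_measurable (E \<Otimes>\<^sub>M E)"
      unfolding E_def by (intro ip_meas2 measurable_fst)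
    have m2[measurable]: "(\<lambda>p. ip n (fst p) (snd p)) \<in> borel_measurable (E \<Otimes>\<^sub>M E)"
      unfolding E_def by (intro ip_meas2 measurable_fst measurable_snd)
    have FE: "F \<in> sets (E \<Otimes>\<^sub>M E)" unfolding F2 by measurable
    have setsPP: "sets (P n \<Otimes>\<^sub>M P n) = sets (E \<Otimes>\<^sub>M E)"
      by (intro sets_pair_measure_cong setsP)
    have spPP: "space (P n \<Otimes>\<^sub>M P n) = space (E \<Otimes>\<^sub>M E)"
      using sets_eq_imp_space_eq[OF setsPP] .
    interpret PP: prob_space "P n \<Otimes>\<^sub>M P n" by (intro prob_space_pair Pn.prob_space_axioms)
    have FPP: "F \<in> sets (P n \<Otimes>\<^sub>M P n)" using FE setsPP by simp
    have goodeq: "{(x,y) \<in> space (P n \<Otimes>\<^sub>M P n). ip n x x > ip n x y} = space (P n \<Otimes>\<^sub>M P n) - F"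
      unfolding F_def spPP by auto
    have indm: "(\<lambda>p. indicator F p :: ennreal) \<in> borel_measurable (E \<Otimes>\<^sub>M E)" using FE by simp
    have indEQ: "(\<lambda>p. indicator F p :: ennreal) \<in> borel_measurable (E \<Otimes>\<^sub>M Q)"
      using indm by (subst measurable_cong_sets[OF sets_pair_measure_cong[OF refl setsQ] refl])
    have indm_y: "(\<lambda>y. indicator F (x, y) :: ennreal) \<in> borel_measurable E" if "x \<in> space E" for x
      using measurable_Pair2[OF indm that] .
    have dom: "nn_integral (P n) f \<le> ennreal C * nn_integral Q f" if f: "f \<in> borel_measurable E" for f
    proof (rule dom_nn)
      show "sets (P n) = sets Q" using setsP setsQ by simp
      show "finite_measure (P n)" "finite_measure Q" by unfold_locales
      show "0 \<le> C" using C1 by simp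
      show "f \<in> borel_measurable Q" using f by (simp add: measurable_cong_sets[OF setsQ refl])
      fix A assume "A \<in> sets Q"
      then have A: "A \<in> sets (euclid_space n)" using setsQ E_def by simp
      have "measure (P n) A \<le> C0 * measure Q A" using C0 n A unfolding Q_def by blast
      also have "\<dots> \<le> C * measure Q A" unfolding C_def by (intro mult_right_mono) auto
      finally show "measure (P n) A \<le> C * measure Q A" .
    qed
    have hm: "(\<lambda>x. \<integral>\<^sup>+y. indicator F (x, y) \<partial>Q) \<in> borel_measurable E"
      using Qp.borel_measurable_nn_integral_fst[OF indEQ] .
    have ipsc: "ip n (sc x) (sc y) = (s n)^2 * ip n x y" for x y
      unfolding ip_def sc_def by (simp add: sum_distrib_left power2_eq_square mult_ac)
    have pt: "indicator F (sc x, sc y) \<le> (ennreal (exp (ip n x y - ip n x x)))" for x y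
    proof (cases "(sc x, sc y) \<in> F")
      case True
      then have "(s n)^2 * ip n x x \<le> (s n)^2 * ip n x y" unfolding F_def by (auto simp: ipsc)
      then have "ip n x x \<le> ip n x y" using assms(3)[OF n] by simp
      then have "1 \<le> exp (ip n x y - ip n x x)" by simp
      then show ?thesis using True by simp
    qed simp
    have "emeasure (P n \<Otimes>\<^sub>M P n) F = (\<integral>\<^sup>+x. \<integral>\<^sup>+y. indicator F (x, y) \<partial>P n \<partial>P n)"
      by (rule Pn.emeasure_pair_measure[OF FPP])
    also have "\<dots> \<le> (\<integral>\<^sup>+x. ennreal C * \<integral>\<^sup>+y. indicator F (x, y) \<partial>Q \<partial>P n)"
      by (intro nn_integral_mono dom indm_y) (simp add: spP)
    also have "\<dots> = ennreal C * (\<integral>\<^sup>+x. \<integral>\<^sup>+y. indicator F (x, y) \<partial>Q \<partial>P n)"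
      using hm by (intro nn_integral_cmult) (simp add: measurable_cong_sets[OF setsP refl])
    also have "\<dots> \<le> ennreal C * (ennreal C * (\<integral>\<^sup>+x. \<integral>\<^sup>+y. indicator F (x, y) \<partial>Q \<partial>Q))"
      by (intro mult_left_mono dom hm) simp
    finally have step1: "emeasure (P n \<Otimes>\<^sub>M P n) F \<le> ennreal C * (ennreal C * (\<integral>\<^sup>+x. \<integral>\<^sup>+y. indicator F (x, y) \<partial>Q \<partial>Q))" .
    moreover have "(\<integral>\<^sup>+x. \<integral>\<^sup>+y. indicator F (x, y) \<partial>Q \<partial>Q) \<le> ennreal ((1 / sqrt 2) ^ n)"
    proof -
      have "(\<integral>\<^sup>+x. \<integral>\<^sup>+y. indicator F (x, y) \<partial>Q \<partial>Q) = (\<integral>\<^sup>+x. \<integral>\<^sup>+y. indicator F (sc x, y) \<partial>Q \<partial>G)"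
        using hm by (subst nn_integral_distr[of sc G E, folded Qdef]) (simp_all add: scm measurable_cong_sets[OF setsQ refl])
      also have "\<dots> = (\<integral>\<^sup>+x. \<integral>\<^sup>+y. indicator F (sc x, sc y) \<partial>G \<partial>G)"
      proof (rule nn_integral_cong)
        fix x assume "x \<in> space G"
        then have "sc x \<in> space E" using scm by (simp add: measurable_space)
        then show "(\<integral>\<^sup>+y. indicator F (sc x, y) \<partial>Q) = (\<integral>\<^sup>+y. indicator F (sc x, sc y) \<partial>G)"
          unfolding Qdef using scm indm_y by (subst nn_integral_distr) simp_all
      qed
      also have "\<dots> \<le> (\<integral>\<^sup>+x. \<integral>\<^sup>+y. ennreal (exp (ip n x y - ip n x x)) \<partial>G \<partial>G)"
        by (intro nn_integral_mono pt)
      also have "\<dots> = ennreal ((1 / sqrt 2) ^ n)" unfolding G_def by (rule gauss_bound)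
      finally show ?thesis .
    qed
    ultimately have "emeasure (P n \<Otimes>\<^sub>M P n) F \<le> ennreal C * (ennreal C * ennreal ((1 / sqrt 2) ^ n))"
      by (meson order_trans mult_left_mono zero_le)
    then have key: "emeasure (P n \<Otimes>\<^sub>M P n) F \<le> ennreal (C^2 * (1 / sqrt 2) ^ n)"
      using C1 by (simp add: ennreal_mult[symmetric] power2_eq_square mult_ac)
    have mF: "measure (P n \<Otimes>\<^sub>M P n) F \<le> C^2 * (1 / sqrt 2) ^ n"
      using key by (simp add: PP.emeasure_eq_measure)
    have "measure (P n \<Otimes>\<^sub>M P n) {(x, y) \<in> space (P n \<Otimes>\<^sub>M P n). ip n x x > ip n x y} \<ge> 1 - C^2 * (1 / sqrt 2) ^ n"
      unfolding goodeq using PP.prob_compl[OF FPP] mF by simp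
    then show "measure (P n \<Otimes>\<^sub>M P n) {(x, y) \<in> space (P n \<Otimes>\<^sub>M P n). ip n x x > ip n x y} \<ge> 1 - C^2 * (1 / sqrt 2) ^ n" .
  qed
qed

end
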